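(* Let $G$ be a quasi-regular mixed lattice group and let $x,y\in G$ with $x\preceq y$. Then for every $u\in G$, $$u\curlywedge x\preceq u\curlywedge y \qquad\text{and}\qquad u\curlyvee x\preceq u\curlyvee y .$$
   Context: A mixed lattice group is a commutative group $G$ with two partial orderings $\le$ (initial order) and $\preceq$ (specific order), both translation invariant ($x\le y\Rightarrow x+z\le y+z$, and likewise for $\preceq$), such that for all $x,y\in G$ the mixed lower envelope $x\curlywedge y=\max\{w\in G: w\preceq x \text{ and } w\le y\}$ and the mixed upper envelope $x\curlyvee y=\min\{w\in G: x\preceq w \text{ and } y\le w\}$ exist, where max and min are taken with respect to $\le$. $G$ is called quasi-regular if the set $G_{sp}=\{x\in G: 0\preceq x\}$ is closed under $\curlywedge$ and $\curlyvee$. *)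

theory Defs
  imports Main
begin

text \<open>A commutative group is modelled by a type of class ab_group_add.
  The initial order is le, the specific order is sp (both given as relations).\<close>

definition partial_order_rel :: "('a \<Rightarrow> 'a \<Rightarrow> bool) \<Rightarrow> bool" where
  "partial_order_rel r \<longleftrightarrow> (\<forall>x. r x x) \<and> (\<forall>x y z. r x y \<longrightarrow> r y z \<longrightarrow> r x z)
      \<and> (\<forall>x y. r x y \<longrightarrow> r y x \<longrightarrow> x = y)"

definition translation_invariant :: "('a::ab_group_add \<Rightarrow> 'a \<Rightarrow> bool) \<Rightarrow> bool" where
  "translation_invariant r \<longleftrightarrow> (\<forall>x y z. r x y \<longrightarrow> r (x + z) (y + z))"

definition is_greatest_rel :: "('a \<Rightarrow> 'a \<Rightarrow> bool) \<Rightarrow> 'a set \<Rightarrow> 'a \<Rightarrow> bool" where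
  "is_greatest_rel r S w \<longleftrightarrow> w \<in> S \<and> (\<forall>v\<in>S. r v w)"

definition is_least_rel :: "('a \<Rightarrow> 'a \<Rightarrow> bool) \<Rightarrow> 'a set \<Rightarrow> 'a \<Rightarrow> bool" where
  "is_least_rel r S w \<longleftrightarrow> w \<in> S \<and> (\<forall>v\<in>S. r w v)"

definition mixed_lower :: "('a \<Rightarrow> 'a \<Rightarrow> bool) \<Rightarrow> ('a \<Rightarrow> 'a \<Rightarrow> bool) \<Rightarrow> 'a \<Rightarrow> 'a \<Rightarrow> 'a" where
  "mixed_lower le sp x y = (THE w. is_greatest_rel le {w. sp w x \<and> le w y} w)"

definition mixed_upper :: "('a \<Rightarrow> 'a \<Rightarrow> bool) \<Rightarrow> ('a \<Rightarrow> 'a \<Rightarrow> bool) \<Rightarrow> 'a \<Rightarrow> 'a \<Rightarrow> 'a" where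
  "mixed_upper le sp x y = (THE w. is_least_rel le {w. sp x w \<and> le y w} w)"

definition mixed_lattice_group :: "('a::ab_group_add \<Rightarrow> 'a \<Rightarrow> bool) \<Rightarrow> ('a \<Rightarrow> 'a \<Rightarrow> bool) \<Rightarrow> bool" where
  "mixed_lattice_group le sp \<longleftrightarrow>
     partial_order_rel le \<and> partial_order_rel sp \<and>
     translation_invariant le \<and> translation_invariant sp \<and>
     (\<forall>x y. \<exists>w. is_greatest_rel le {w. sp w x \<and> le w y} w) \<and>
     (\<forall>x y. \<exists>w. is_least_rel le {w. sp x w \<and> le y w} w)"

definition quasi_regular :: "('a::ab_group_add \<Rightarrow> 'a \<Rightarrow> bool) \<Rightarrow> ('a \<Rightarrow> 'a \<Rightarrow> bool) \<Rightarrow> bool" where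
  "quasi_regular le sp \<longleftrightarrow> mixed_lattice_group le sp \<and>
     (\<forall>x y. sp 0 x \<longrightarrow> sp 0 y \<longrightarrow> sp 0 (mixed_lower le sp x y) \<and> sp 0 (mixed_upper le sp x y))"

end

theory Submission
  imports Defs
begin

lemma shift:
  fixes r :: "'a::ab_group_add \<Rightarrow> 'a \<Rightarrow> bool"
  assumes "translation_invariant r" "r a b" "a' - b' = a - b"
  shows "r a' b'"
proof -
  have "r (a + (a' - a)) (b + (a' - a))"
    using assms(1,2) unfolding translation_invariant_def by blast
  moreover have "b + (a' - a) = b'" using assms(3) by (simp add: algebra_simps)
  ultimately show ?thesis by simp
qed

lemma po_trans: "partial_order_rel r \<Longrightarrow> r a b \<Longrightarrow> r b c \<Longrightarrow> r a c"
  unfolding partial_order_rel_def by blast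

lemma po_antisym: "partial_order_rel r \<Longrightarrow> r a b \<Longrightarrow> r b a \<Longrightarrow> a = b"
  unfolding partial_order_rel_def by blast

lemma ml_prop:
  assumes "mixed_lattice_group le sp"
  shows "is_greatest_rel le {w. sp w x \<and> le w y} (mixed_lower le sp x y)"
proof -
  from assms obtain w where w: "is_greatest_rel le {w. sp w x \<and> le w y} w"
    unfolding mixed_lattice_group_def by blast
  have po: "partial_order_rel le" using assms unfolding mixed_lattice_group_def by blast
  have u: "\<And>v. is_greatest_rel le {w. sp w x \<and> le w y} v \<Longrightarrow> v = w"
    using w po po_antisym unfolding is_greatest_rel_def by metis
  show ?thesis unfolding mixed_lower_def by (rule theI[where P="is_greatest_rel le {w. sp w x \<and> le w y}", OF w u])
qed

lemma mu_prop:
  assumes "mixed_lattice_group le sp"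
  shows "is_least_rel le {w. sp x w \<and> le y w} (mixed_upper le sp x y)"
proof -
  from assms obtain w where w: "is_least_rel le {w. sp x w \<and> le y w} w"
    unfolding mixed_lattice_group_def by blast
  have po: "partial_order_rel le" using assms unfolding mixed_lattice_group_def by blast
  have u: "\<And>v. is_least_rel le {w. sp x w \<and> le y w} v \<Longrightarrow> v = w"
    using w po po_antisym unfolding is_least_rel_def by metis
  show ?thesis unfolding mixed_upper_def by (rule theI[where P="is_least_rel le {w. sp x w \<and> le y w}", OF w u])
qed

lemma ml_eqI:
  assumes "mixed_lattice_group le sp" "sp w x" "le w y"
    "\<And>v. sp v x \<Longrightarrow> le v y \<Longrightarrow> le v w"
  shows "mixed_lower le sp x y = w"
proof -
  have po: "partial_order_rel le" using assms unfolding mixed_lattice_group_def by blast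
  show ?thesis using ml_prop[OF assms(1), of x y] assms(2-4) po_antisym[OF po]
    unfolding is_greatest_rel_def by auto
qed

lemma mu_eqI:
  assumes "mixed_lattice_group le sp" "sp x w" "le y w"
    "\<And>v. sp x v \<Longrightarrow> le y v \<Longrightarrow> le w v"
  shows "mixed_upper le sp x y = w"
proof -
  have po: "partial_order_rel le" using assms unfolding mixed_lattice_group_def by blast
  show ?thesis using mu_prop[OF assms(1), of x y] assms(2-4) po_antisym[OF po]
    unfolding is_least_rel_def by auto
qed

lemma qlb:
  fixes le sp :: "'a::ab_group_add \<Rightarrow> 'a \<Rightarrow> bool"
  assumes q: "quasi_regular le sp" and "sp z a" "sp z b"
  shows "sp z (mixed_lower le sp a b)"
proof -
  have m: "mixed_lattice_group le sp" using q unfolding quasi_regular_def by blast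
  have tl: "translation_invariant le" and ts: "translation_invariant sp"
    using m unfolding mixed_lattice_group_def by blast+
  have a: "sp 0 (a - z)" by (rule shift[OF ts assms(2)]) simp
  have b: "sp 0 (b - z)" by (rule shift[OF ts assms(3)]) simp
  have c: "sp 0 (mixed_lower le sp (a - z) (b - z))"
    using q a b unfolding quasi_regular_def by blast
  have P: "is_greatest_rel le {w. sp w a \<and> le w b} (mixed_lower le sp a b)"
    by (rule ml_prop[OF m])
  have "mixed_lower le sp (a - z) (b - z) = mixed_lower le sp a b - z"
  proof (rule ml_eqI[OF m])
    show "sp (mixed_lower le sp a b - z) (a - z)"
      using P unfolding is_greatest_rel_def by (auto intro: shift[OF ts])
    show "le (mixed_lower le sp a b - z) (b - z)"
      using P unfolding is_greatest_rel_def by (auto intro: shift[OF tl])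
    fix v assume "sp v (a - z)" "le v (b - z)"
    then have "sp (v + z) a" "le (v + z) b" by (auto intro: shift[OF ts] shift[OF tl])
    then have "le (v + z) (mixed_lower le sp a b)" using P unfolding is_greatest_rel_def by auto
    then show "le v (mixed_lower le sp a b - z)" by (rule shift[OF tl]) simp
  qed
  with c show ?thesis by (auto intro: shift[OF ts])
qed

lemma qub:
  fixes le sp :: "'a::ab_group_add \<Rightarrow> 'a \<Rightarrow> bool"
  assumes q: "quasi_regular le sp" and "sp a z" "sp b z"
  shows "sp (mixed_upper le sp a b) z"
proof -
  have m: "mixed_lattice_group le sp" using q unfolding quasi_regular_def by blast
  have tl: "translation_invariant le" and ts: "translation_invariant sp"
    using m unfolding mixed_lattice_group_def by blast+
  have a: "sp 0 (z - a)" by (rule shift[OF ts assms(2)]) simp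
  have b: "sp 0 (z - b)" by (rule shift[OF ts assms(3)]) simp
  have c: "sp 0 (mixed_lower le sp (z - a) (z - b))"
    using q a b unfolding quasi_regular_def by blast
  have P: "is_least_rel le {w. sp a w \<and> le b w} (mixed_upper le sp a b)"
    by (rule mu_prop[OF m])
  have "mixed_lower le sp (z - a) (z - b) = z - mixed_upper le sp a b"
  proof (rule ml_eqI[OF m])
    show "sp (z - mixed_upper le sp a b) (z - a)"
      using P unfolding is_least_rel_def by (auto intro: shift[OF ts])
    show "le (z - mixed_upper le sp a b) (z - b)"
      using P unfolding is_least_rel_def by (auto intro: shift[OF tl])
    fix v assume "sp v (z - a)" "le v (z - b)"
    then have "sp a (z - v)" "le b (z - v)" by (auto intro: shift[OF ts] shift[OF tl])
    then have "le (mixed_upper le sp a b) (z - v)" using P unfolding is_least_rel_def by auto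
    then show "le v (z - mixed_upper le sp a b)" by (rule shift[OF tl]) simp
  qed
  with c show ?thesis by (auto intro: shift[OF ts])
qed

theorem theorem3p3:
  fixes le sp :: "'a::ab_group_add \<Rightarrow> 'a \<Rightarrow> bool"
  assumes "quasi_regular le sp"
    and "sp x y"
  shows "sp (mixed_lower le sp u x) (mixed_lower le sp u y) \<and>
         sp (mixed_upper le sp u x) (mixed_upper le sp u y)"
proof -
  have q: "quasi_regular le sp" by fact
  have m: "mixed_lattice_group le sp" using q unfolding quasi_regular_def by blast
  have tl: "translation_invariant le" and ts: "translation_invariant sp"
    and pl: "partial_order_rel le" and ps: "partial_order_rel sp"
    using m unfolding mixed_lattice_group_def by blast+
  define mm where "mm = mixed_lower le sp u x"
  define n where "n = mixed_lower le sp u y"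
  define y' where "y' = mm + y - x"
  have Pm: "is_greatest_rel le {w. sp w u \<and> le w x} mm" unfolding mm_def by (rule ml_prop[OF m])
  have Pn: "is_greatest_rel le {w. sp w u \<and> le w y} n" unfolding n_def by (rule ml_prop[OF m])
  have mu: "sp mm u" and mx: "le mm x" using Pm unfolding is_greatest_rel_def by auto
  have nu: "sp n u" and ny: "le n y" using Pn unfolding is_greatest_rel_def by auto
  have my': "sp mm y'" by (rule shift[OF ts assms(2)]) (simp add: y'_def)
  have 1: "sp mm (mixed_lower le sp u y')" by (rule qlb[OF q mu my'])
  have y'y: "le y' y" by (rule shift[OF tl mx]) (simp add: y'_def)
  have "mixed_lower le sp u y' = n"
  proof (rule ml_eqI[OF m nu])
    have a: "sp (u + x - y) u" by (rule shift[OF ts assms(2)]) simp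
    have b: "sp (n + x - y) (u + x - y)" by (rule shift[OF ts nu]) simp
    have c: "le (n + x - y) x" by (rule shift[OF tl ny]) simp
    have "le (n + x - y) mm" using po_trans[OF ps b a] c Pm unfolding is_greatest_rel_def by auto
    then show "le n y'" by (rule shift[OF tl]) (simp add: y'_def)
    fix v assume "sp v u" "le v y'"
    then show "le v n" using po_trans[OF pl _ y'y] Pn unfolding is_greatest_rel_def by auto
  qed
  with 1 have g1: "sp mm n" by simp
  define M where "M = mixed_upper le sp u x"
  define N where "N = mixed_upper le sp u y"
  define x' where "x' = N - y + x"
  have PM: "is_least_rel le {w. sp u w \<and> le x w} M" unfolding M_def by (rule mu_prop[OF m])
  have PN: "is_least_rel le {w. sp u w \<and> le y w} N" unfolding N_def by (rule mu_prop[OF m])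
  have uM: "sp u M" and xM: "le x M" using PM unfolding is_least_rel_def by auto
  have uN: "sp u N" and yN: "le y N" using PN unfolding is_least_rel_def by auto
  have x'N: "sp x' N" by (rule shift[OF ts assms(2)]) (simp add: x'_def)
  have 2: "sp (mixed_upper le sp u x') N" by (rule qub[OF q uN x'N])
  have xx': "le x x'" by (rule shift[OF tl yN]) (simp add: x'_def)
  have "mixed_upper le sp u x' = M"
  proof (rule mu_eqI[OF m uM])
    have a: "sp M (M + y - x)" by (rule shift[OF ts assms(2)]) simp
    have c: "le y (M + y - x)" by (rule shift[OF tl xM]) simp
    have "le N (M + y - x)" using po_trans[OF ps uM a] c PN unfolding is_least_rel_def by auto
    then show "le x' M" by (rule shift[OF tl]) (simp add: x'_def)
    fix v assume "sp u v" "le x' v"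
    then show "le M v" using po_trans[OF pl xx'] PM unfolding is_least_rel_def by auto
  qed
  with 2 have g2: "sp M N" by simp
  show ?thesis using g1 g2 unfolding mm_def n_def M_def N_def by simp
qed

end
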